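(* Assume that for every $k=2,\dots,t$ the matrix $U^{(k)}$ is nonsingular. Then for every $k=1,\dots,t$ and every $j$ with $0\le j<\deg P^{(k)}_2$, $$\tilde S_{k,j}(F,G)=(\hat R_{k-1}\hat B_{k-1})^{J_{k,j}}\,\hat B_{k,j}\,\hat S_{k,j}(F,G).$$
   Context: Let $K$ be a field of characteristic zero; $|M|$ denotes the determinant of a square matrix $M$; $\deg$ denotes degree. Subresultant matrices. Let $A=a_px^p+\dots+a_0$, $B=b_qx^q+\dots+b_0$ over $K$ regarded with formal degrees $p\ge q>0$. For $0\le j<q$, $N^{(j)}(A,B)$ is the $(p+q-j)\times(p+q-2j)$ matrix whose $c$-th column ($c=1,\dots,q-j$) has $a_p,\dots,a_0$ in rows $c,\dots,c+p$ and zeros elsewhere, and whose $(q-j+c)$-th column ($c=1,\dots,p-j$) has $b_q,\dots,b_0$ in rows $c,\dots,c+q$ and zeros elsewhere. PRS. For nonzero $A,B\in K[x]$, $\deg A>\deg B$, a PRS is $(P_1,\dots,P_l)$, nonzero polynomials, $P_1=A$, $P_2=B$, $\deg P_{i-1}>\deg P_i$, $\alpha_iP_{i-2}=q_{i-1}P_{i-1}+\beta_iP_i$ ($i=3,\dots,l$) with $\alpha_i,\beta_i\in K\setminus\{0\}$, $q_{i-1}\in K[x]$, and $P_l=\gamma\gcd(A,B)$, $0\ne\gamma\in K$. Recursive PRS. $F=f_mx^m+\dots+f_0$, $G=g_nx^n+\dots+g_0\in K[x]$, $f_mg_n\ne0$, $m>n>0$. A complete recursive PRS consists of PRSs $(P^{(k)}_1,\dots,P^{(k)}_{l_k})$,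 $k=1,\dots,t$, $P^{(1)}_1=F$, $P^{(1)}_2=G$, for $k\ge2$ $P^{(k)}_1=P^{(k-1)}_{l_{k-1}}$, $P^{(k)}_2=\frac d{dx}P^{(k)}_1$; $P^{(k)}_{l_k}$ non-constant for $k<t$, $P^{(t)}_{l_t}$ constant. Assume $l_k\ge3$ for $k<t$. Notation: $n^{(k)}_i=\deg P^{(k)}_i$, $j_0=m$, $j_k=n^{(k)}_{l_k}$ (so $n^{(k)}_1=j_{k-1}$, $n^{(k)}_2=j_{k-1}-1$ for $k\ge2$). Nested subresultants ($0\le j<n^{(k)}_2$): $\tilde N^{(1,j)}=N^{(j)}(F,G)$; for $k\ge2$, $\tilde N^{(k,j)}=N^{(j)}\big(\tilde S_{k-1,j_{k-1}}(F,G),\frac d{dx}\tilde S_{k-1,j_{k-1}}(F,G)\big)$ with formal degrees $j_{k-1}$, $j_{k-1}-1$; $\tilde N^{(k,j)}_\tau$ ($\tau=0,\dots,j$) is formed by the top $n^{(k)}_1+n^{(k)}_2-2j-1$ rows and the $(n^{(k)}_1+n^{(k)}_2-j-\tau)$-th row of $\tilde N^{(k,j)}$, and $\tilde S_{k,j}(F,G)=\sum_{\tau=0}^j|\tilde N^{(k,j)}_\tau|x^\tau$. Reduced nested subresultants ($0\le j<n^{(k)}_2$). Set $J_{1,j}=m+n-2j$ and, for $k\ge2$, $I_{k,j}=2j_{k-1}-j-1$, $J_{k,j}=2j_{k-1}-2j-1$. $\hat N^{(1,j)}=N^{(j)}(F,G)$. For $k\ge2$, let $\hat N=\hat N^{(k-1,j_{k-1})}$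 with $J'$ columns; let $\hat N_U$ be $\hat N$ with its bottom $j_{k-1}+1$ rows deleted, written $\hat N_U=(U^{(k)}\mid\mathbf v^{(k)})$ with $U^{(k)}$ square and $\mathbf v^{(k)}$ a column, and let $\hat N_L$ be the bottom $j_{k-1}+1$ rows of $\hat N$, with rows $\boldsymbol\rho_1,\dots,\boldsymbol\rho_{j_{k-1}+1}$. For $\tau=0,\dots,j_{k-1}$, $\hat A_\tau=|\hat N_\tau|$ where $\hat N_\tau$ is $\hat N_U$ with $\boldsymbol\rho_{j_{k-1}-\tau+1}$ appended as last row; $\hat A(x)=\sum_\tau\hat A_\tau x^\tau$, and $H^{(k,j)}=N^{(j)}(\hat A(x),\frac d{dx}\hat A(x))$ with formal degrees $j_{k-1}$, $j_{k-1}-1$ (size $I_{k,j}\times J_{k,j}$). For each position $(p,q)$ define a row vector $\mathbf w_{p,q}$ of length $J'$: if $q\le j_{k-1}-1-j$ and $0\le p-q\le j_{k-1}$, $\mathbf w_{p,q}=\boldsymbol\rho_{p-q+1}$; if $q=j_{k-1}-1-j+q'$ with $1\le q'\le j_{k-1}-j$ and $0\le p-q'\le j_{k-1}-1$, $\mathbf w_{p,q}=(j_{k-1}-p+q')\boldsymbol\rho_{p-q'+1}$; otherwise $\mathbf w_{p,q}=\mathbf 0$ (so the $(p,q)$ entry of $H^{(k,j)}$ equals the determinant of $\hat N_U$ with $\mathbf w_{p,q}$ appended, or $0$). Write $\mathbf w_{p,q}=(\mathbf b_{p,q}\mid g_{p,q})$, $g_{p,q}$ its last entry; with $U^{(k)}$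 nonsingular let $\mathbf x_{p,q}U^{(k)}=-\mathbf b_{p,q}$ and $h^{(k,j)}_{p,q}=g_{p,q}+\mathbf x_{p,q}\mathbf v^{(k)}$. Then $\hat N^{(k,j)}=(h^{(k,j)}_{p,q})_{p\le I_{k,j},\,q\le J_{k,j}}$. For $\tau=0,\dots,j$, $\hat N^{(k,j)}_\tau$ is formed by the top $n^{(k)}_1+n^{(k)}_2-2j-1$ rows and the $(n^{(k)}_1+n^{(k)}_2-j-\tau)$-th row of $\hat N^{(k,j)}$, and $\hat S_{k,j}(F,G)=\sum_{\tau=0}^j|\hat N^{(k,j)}_\tau|x^\tau$. Constants. $\hat B_{1,j}=1$ and $\hat B_{k,j}=|U^{(k)}|^{J_{k,j}}$ for $k\ge2$; $\hat B_0=\hat B_1=1$, $\hat B_k=\hat B_{k,j_k}$ for $k\ge2$; $\hat R_0=\hat R_1=1$, $\hat R_k=(\hat R_{k-1}\hat B_{k-1})^{J_{k,j_k}}$ for $k\ge2$. *)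

theory Defs
  imports "HOL-Computational_Algebra.Polynomial"
          "HOL-Computational_Algebra.Polynomial_Factorial"
          "Jordan_Normal_Form.Determinant"
begin

text \<open>N^(j)(A,B) with formal degrees p (for A) and q (for B): a (p+q-j) x (p+q-2j)
  matrix.\<close>
definition subres_mat :: "nat \<Rightarrow> nat \<Rightarrow> nat \<Rightarrow> 'a::field poly \<Rightarrow> 'a poly \<Rightarrow> 'a mat" where
  "subres_mat p q j A B = mat (p + q - j) (p + q - 2 * j) (\<lambda>(r, c).
     if c < q - j then (if c \<le> r \<and> r - c \<le> p then coeff A (p - (r - c)) else 0)
     else (let c' = c - (q - j) in
           if c' \<le> r \<and> r - c' \<le> q then coeff B (q - (r - c')) else 0))"

text \<open>For s = n1 + n2: the matrix formed by the top s-2j-1 rows and the (s-j-tau)-th row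
  (1-based; 0-based row s-j-tau-1) of M.\<close>
definition sub_minor :: "nat \<Rightarrow> nat \<Rightarrow> 'a mat \<Rightarrow> nat \<Rightarrow> 'a mat" where
  "sub_minor s j M \<tau> = mat (s - 2 * j) (s - 2 * j) (\<lambda>(r, c).
     if r < s - 2 * j - 1 then M $$ (r, c) else M $$ (s - j - \<tau> - 1, c))"

definition subres_poly :: "nat \<Rightarrow> nat \<Rightarrow> 'a::field mat \<Rightarrow> 'a poly" where
  "subres_poly s j M = (\<Sum>\<tau>\<le>j. monom (det (sub_minor s j M \<tau>)) \<tau>)"

definition is_PRS :: "'a::field_gcd poly \<Rightarrow> 'a poly \<Rightarrow> (nat \<Rightarrow> 'a poly) \<Rightarrow> nat \<Rightarrow> bool" where
  "is_PRS A B P l \<longleftrightarrow>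
     A \<noteq> 0 \<and> B \<noteq> 0 \<and> degree A > degree B \<and> 2 \<le> l \<and>
     P 1 = A \<and> P 2 = B \<and>
     (\<forall>i\<in>{1..l}. P i \<noteq> 0) \<and>
     (\<forall>i\<in>{2..l}. degree (P (i - 1)) > degree (P i)) \<and>
     (\<forall>i\<in>{3..l}. \<exists>\<alpha> \<beta> q. \<alpha> \<noteq> 0 \<and> \<beta> \<noteq> 0 \<and>
         smult \<alpha> (P (i - 2)) = q * P (i - 1) + smult \<beta> (P i)) \<and>
     (\<exists>\<gamma>. \<gamma> \<noteq> 0 \<and> P l = smult \<gamma> (gcd A B))"

text \<open>Complete recursive PRS: P k i is P^(k)_i (k = 1..t, i = 1..l k).\<close>
definition complete_rec_PRS ::
  "'a::field_gcd poly \<Rightarrow> 'a poly \<Rightarrow> nat \<Rightarrow> (nat \<Rightarrow> nat \<Rightarrow> 'a poly) \<Rightarrow> (nat \<Rightarrow> nat) \<Rightarrow> bool" where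
  "complete_rec_PRS F G t P l \<longleftrightarrow>
     degree F > degree G \<and> degree G > 0 \<and> 1 \<le> t \<and>
     (\<forall>k\<in>{1..t}. is_PRS (P k 1) (P k 2) (P k) (l k)) \<and>
     P 1 1 = F \<and> P 1 2 = G \<and>
     (\<forall>k\<in>{2..t}. P k 1 = P (k - 1) (l (k - 1)) \<and> P k 2 = pderiv (P k 1)) \<and>
     (\<forall>k\<in>{1..<t}. degree (P k (l k)) > 0) \<and>
     degree (P t (l t)) = 0"

definition jseq :: "(nat \<Rightarrow> nat \<Rightarrow> 'a::zero poly) \<Rightarrow> (nat \<Rightarrow> nat) \<Rightarrow> nat \<Rightarrow> nat" where
  "jseq P l k = (if k = 0 then degree (P 1 1) else degree (P k (l k)))"

fun tildeS :: "(nat \<Rightarrow> nat) \<Rightarrow> 'a::field poly \<Rightarrow> 'a poly \<Rightarrow> nat \<Rightarrow> nat \<Rightarrow> 'a poly" where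
  "tildeS js F G 0 j = 0"
| "tildeS js F G (Suc 0) j =
     subres_poly (degree F + degree G) j (subres_mat (degree F) (degree G) j F G)"
| "tildeS js F G (Suc (Suc k)) j =
     (let d = js (Suc k); Q = tildeS js F G (Suc k) d in
      subres_poly (2 * d - 1) j (subres_mat d (d - 1) j Q (pderiv Q)))"

text \<open>Given Nh = hat N^(k-1, j_{k-1}) and d = j_{k-1}.  All of the following are
  0-based in matrix/vector positions; rho and w, h use the paper's 1-based indices.\<close>

definition red_topn :: "'a mat \<Rightarrow> nat \<Rightarrow> nat" where
  "red_topn Nh d = dim_row Nh - (d + 1)"

text \<open>N_U = (U | v): U = first dim_col-1 columns of the top rows, v = last column.\<close>
definition red_U :: "'a mat \<Rightarrow> nat \<Rightarrow> 'a mat" where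
  "red_U Nh d = mat (red_topn Nh d) (dim_col Nh - 1) (\<lambda>(r, c). Nh $$ (r, c))"

definition red_v :: "'a mat \<Rightarrow> nat \<Rightarrow> nat \<Rightarrow> 'a" where
  "red_v Nh d r = Nh $$ (r, dim_col Nh - 1)"

text \<open>rho_i (i = 1..d+1): the i-th of the bottom d+1 rows, as a function of the column.\<close>
definition red_rho :: "'a mat \<Rightarrow> nat \<Rightarrow> nat \<Rightarrow> nat \<Rightarrow> 'a" where
  "red_rho Nh d i c = Nh $$ (red_topn Nh d + i - 1, c)"

definition red_w :: "'a::field mat \<Rightarrow> nat \<Rightarrow> nat \<Rightarrow> nat \<Rightarrow> nat \<Rightarrow> nat \<Rightarrow> 'a" where
  "red_w Nh d j p q c =
     (if 1 \<le> q \<and> q \<le> d - 1 - j \<and> q \<le> p \<and> p - q \<le> d then red_rho Nh d (p - q + 1) c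
      else if d - 1 - j < q \<and> q - (d - 1 - j) \<le> d - j \<and>
              q - (d - 1 - j) \<le> p \<and> p - (q - (d - 1 - j)) \<le> d - 1
      then of_nat (d - (p - (q - (d - 1 - j)))) * red_rho Nh d (p - (q - (d - 1 - j)) + 1) c
      else 0)"

text \<open>x_{p,q} with x_{p,q} U = - b_{p,q} (b = all but the last entry of w).\<close>
definition red_x :: "'a::field mat \<Rightarrow> nat \<Rightarrow> nat \<Rightarrow> nat \<Rightarrow> nat \<Rightarrow> nat \<Rightarrow> 'a" where
  "red_x Nh d j p q = (SOME x. \<forall>c < dim_col Nh - 1.
       (\<Sum>r < red_topn Nh d. x r * red_U Nh d $$ (r, c)) = - red_w Nh d j p q c)"

definition red_h :: "'a::field mat \<Rightarrow> nat \<Rightarrow> nat \<Rightarrow> nat \<Rightarrow> nat \<Rightarrow> 'a" where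
  "red_h Nh d j p q = red_w Nh d j p q (dim_col Nh - 1)
     + (\<Sum>r < red_topn Nh d. red_x Nh d j p q r * red_v Nh d r)"

definition red_step :: "'a::field mat \<Rightarrow> nat \<Rightarrow> nat \<Rightarrow> 'a mat" where
  "red_step Nh d j = mat (2 * d - j - 1) (2 * d - 2 * j - 1)
     (\<lambda>(p, q). red_h Nh d j (p + 1) (q + 1))"

fun hatN :: "(nat \<Rightarrow> nat) \<Rightarrow> 'a::field poly \<Rightarrow> 'a poly \<Rightarrow> nat \<Rightarrow> nat \<Rightarrow> 'a mat" where
  "hatN js F G 0 j = 0\<^sub>m 0 0"
| "hatN js F G (Suc 0) j = subres_mat (degree F) (degree G) j F G"
| "hatN js F G (Suc (Suc k)) j =
     red_step (hatN js F G (Suc k) (js (Suc k))) (js (Suc k)) j"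

definition Umat :: "(nat \<Rightarrow> nat) \<Rightarrow> 'a::field poly \<Rightarrow> 'a poly \<Rightarrow> nat \<Rightarrow> 'a mat" where
  "Umat js F G k = red_U (hatN js F G (k - 1) (js (k - 1))) (js (k - 1))"

definition hatS :: "(nat \<Rightarrow> nat) \<Rightarrow> 'a::field poly \<Rightarrow> 'a poly \<Rightarrow> nat \<Rightarrow> nat \<Rightarrow> 'a poly" where
  "hatS js F G k j =
     subres_poly (if k = 1 then degree F + degree G else 2 * js (k - 1) - 1) j (hatN js F G k j)"

definition Jkj :: "(nat \<Rightarrow> nat) \<Rightarrow> 'a::zero poly \<Rightarrow> 'a poly \<Rightarrow> nat \<Rightarrow> nat \<Rightarrow> nat" where
  "Jkj js F G k j = (if k = 1 then degree F + degree G - 2 * j else 2 * js (k - 1) - 2 * j - 1)"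

definition hatBkj :: "(nat \<Rightarrow> nat) \<Rightarrow> 'a::field poly \<Rightarrow> 'a poly \<Rightarrow> nat \<Rightarrow> nat \<Rightarrow> 'a" where
  "hatBkj js F G k j = (if k \<le> 1 then 1 else det (Umat js F G k) ^ Jkj js F G k j)"

definition hatB :: "(nat \<Rightarrow> nat) \<Rightarrow> 'a::field poly \<Rightarrow> 'a poly \<Rightarrow> nat \<Rightarrow> 'a" where
  "hatB js F G k = (if k \<le> 1 then 1 else hatBkj js F G k (js k))"

fun hatR :: "(nat \<Rightarrow> nat) \<Rightarrow> 'a::field poly \<Rightarrow> 'a poly \<Rightarrow> nat \<Rightarrow> 'a" where
  "hatR js F G 0 = 1"
| "hatR js F G (Suc 0) = 1"
| "hatR js F G (Suc (Suc k)) =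
     (hatR js F G (Suc k) * hatB js F G (Suc k)) ^ Jkj js F G (Suc (Suc k)) (js (Suc (Suc k)))"

end

theory Submission
  imports Defs
begin

definition Dm :: "'a::comm_ring_1 mat \<Rightarrow> nat \<Rightarrow> (nat \<Rightarrow> 'a) \<Rightarrow> 'a mat" where
  "Dm N n w = mat (Suc n) (Suc n) (\<lambda>(r,c). if r < n then N $$ (r,c) else w c)"

definition Kc :: "'a::comm_ring_1 mat \<Rightarrow> nat \<Rightarrow> nat \<Rightarrow> 'a" where
  "Kc N n c = cofactor (Dm N n (\<lambda>_. 0)) n c"

lemma Dm_carrier[simp]: "Dm N n w \<in> carrier_mat (Suc n) (Suc n)"
  unfolding Dm_def by auto

lemma Dm_lin: "det (Dm N n w) = (\<Sum>c<Suc n. w c * Kc N n c)"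
proof -
  have "det (Dm N n w) = (\<Sum>c<Suc n. Dm N n w $$ (n,c) * cofactor (Dm N n w) n c)"
    by (rule laplace_expansion_row[OF Dm_carrier], simp)
  also have "\<dots> = (\<Sum>c<Suc n. w c * Kc N n c)"
  proof (rule sum.cong[OF refl])
    fix c assume c: "c \<in> {..<Suc n}"
    have "mat_delete (Dm N n w) n c = mat_delete (Dm N n (\<lambda>_. 0)) n c"
      unfolding mat_delete_def Dm_def by (rule eq_matI) auto
    thus "Dm N n w $$ (n,c) * cofactor (Dm N n w) n c = w c * Kc N n c"
      using c unfolding Kc_def cofactor_def by (simp add: Dm_def)
  qed
  finally show ?thesis .
qed

lemma Dm_smult: "det (Dm N n (\<lambda>c. a * f c)) = a * det (Dm N n f)"
  unfolding Dm_lin by (simp add: sum_distrib_left mult.assoc del: sum.lessThan_Suc)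

lemma Dm_zero: "det (Dm N n (\<lambda>c. 0)) = 0"
  unfolding Dm_lin by simp

lemma Dm_row0: assumes r: "r < n"
  shows "(\<Sum>c<Suc n. N $$ (r,c) * Kc N n c) = 0"
proof -
  have "det (Dm N n (\<lambda>c. N $$ (r,c))) = 0"
    by (rule det_identical_rows[OF Dm_carrier, of r n], insert r, auto simp: Dm_def)
  thus ?thesis unfolding Dm_lin .
qed

lemma Kc_last: "Kc N n n = det (mat n n (\<lambda>(r,c). N $$ (r,c)))"
proof -
  have "mat_delete (Dm N n (\<lambda>_. 0)) n n = mat n n (\<lambda>(r,c). N $$ (r,c))"
    unfolding mat_delete_def Dm_def by (rule eq_matI) auto
  thus ?thesis unfolding Kc_def cofactor_def by simp
qed

lemma Dm_schur:
  assumes x: "\<forall>c<n. (\<Sum>r<n. x r * N $$ (r,c)) = - w c"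
  shows "det (Dm N n w) = det (mat n n (\<lambda>(r,c). N $$ (r,c))) * (w n + (\<Sum>r<n. x r * N $$ (r,n)))"
proof -
  have "det (Dm N n w) = (\<Sum>c<n. w c * Kc N n c) + w n * Kc N n n"
    unfolding Dm_lin by simp
  also have "(\<Sum>c<n. w c * Kc N n c) = (\<Sum>c<n. - (\<Sum>r<n. x r * N $$ (r,c)) * Kc N n c)"
    using x by (intro sum.cong) auto
  also have "\<dots> = - (\<Sum>c<n. \<Sum>r<n. x r * N $$ (r,c) * Kc N n c)"
    by (simp add: sum_distrib_right sum_negf)
  also have "\<dots> = - (\<Sum>r<n. \<Sum>c<n. x r * N $$ (r,c) * Kc N n c)"
    by (subst sum.swap, rule refl)
  also have "\<dots> = - (\<Sum>r<n. x r * (\<Sum>c<n. N $$ (r,c) * Kc N n c))"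
    by (simp add: sum_distrib_left mult.assoc)
  also have "\<dots> = - (\<Sum>r<n. x r * (- (N $$ (r,n) * Kc N n n)))"
  proof -
    have "\<And>r. r < n \<Longrightarrow> (\<Sum>c<n. N $$ (r,c) * Kc N n c) = - (N $$ (r,n) * Kc N n n)"
      using Dm_row0 by (simp add: eq_neg_iff_add_eq_0)
    thus ?thesis by (intro arg_cong[where f=uminus] sum.cong) auto
  qed
  finally show ?thesis unfolding Kc_last[symmetric]
    by (simp add: algebra_simps sum_distrib_left sum_distrib_right sum_negf)
qed

lemma solve_exists:
  fixes U :: "'a::field mat"
  assumes U: "U \<in> carrier_mat n n" and d: "det U \<noteq> 0"
  shows "\<exists>x. \<forall>c<n. (\<Sum>r<n. x r * U $$ (r,c)) = b c"
proof -
  define A where "A = adj_mat U"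
  have AU: "A * U = det U \<cdot>\<^sub>m 1\<^sub>m n" and A: "A \<in> carrier_mat n n" using adj_mat[OF U] A_def by auto
  define x where "x r = (\<Sum>i<n. b i * A $$ (i,r)) / det U" for r
  have "(\<Sum>r<n. x r * U $$ (r,c)) = b c" if c: "c < n" for c
  proof -
    have "(\<Sum>r<n. x r * U $$ (r,c)) = (\<Sum>i<n. b i * (\<Sum>r<n. A $$ (i,r) * U $$ (r,c))) / det U"
    proof -
      have "(\<Sum>r<n. x r * U $$ (r,c)) = (\<Sum>r<n. \<Sum>i<n. b i * A $$ (i,r) * U $$ (r,c)) / det U"
        unfolding x_def by (simp add: sum_divide_distrib sum_distrib_right)
      also have "\<dots> = (\<Sum>i<n. \<Sum>r<n. b i * A $$ (i,r) * U $$ (r,c)) / det U"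
        by (subst sum.swap, rule refl)
      finally show ?thesis by (simp add: sum_distrib_left mult.assoc)
    qed
    also have "\<dots> = (\<Sum>i<n. b i * (if i = c then det U else 0)) / det U"
    proof -
      have "\<And>i. i < n \<Longrightarrow> (\<Sum>r<n. A $$ (i,r) * U $$ (r,c)) = (if i = c then det U else 0)"
      proof -
        fix i assume i: "i < n"
        have "(A * U) $$ (i,c) = (\<Sum>r<n. A $$ (i,r) * U $$ (r,c))"
          using A U i c by (simp add: scalar_prod_def atLeast0LessThan)
        thus "?thesis i" using AU i c by (simp split: if_splits)
      qed
      thus ?thesis by (intro arg_cong[where f="\<lambda>z. z / det U"] sum.cong) auto
    qed
    also have "\<dots> = b c" using c d by (simp add: if_distrib cong: if_cong)
    finally show ?thesis .
  qed
  thus ?thesis by blast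
qed


lemma coeff_subres_poly:
  "coeff (subres_poly s j M) \<tau> = (if \<tau> \<le> j then det (sub_minor s j M \<tau>) else 0)"
  unfolding subres_poly_def by (simp add: coeff_sum coeff_monom)

lemma sub_minor_Dm:
  assumes dr: "dim_row Nh = s - d" and dc: "dim_col Nh = s - 2*d" and s: "2*d+1 \<le> s" and t: "\<tau> \<le> d"
  shows "sub_minor s d Nh \<tau> = Dm Nh (s-2*d-1) (red_rho Nh d (d+1-\<tau>))"
  unfolding sub_minor_def Dm_def red_rho_def red_topn_def dr
  by (rule eq_matI) (use s t in \<open>auto simp: Suc_diff_Suc\<close>)

lemma red_h_det:
  fixes Nh :: "'a::field mat"
  assumes dr: "dim_row Nh = s - d" and dc: "dim_col Nh = s - 2*d" and s: "2*d+1 \<le> s"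
    and U: "det (red_U Nh d) \<noteq> 0"
  shows "det (red_U Nh d) * red_h Nh d j p q = det (Dm Nh (s-2*d-1) (red_w Nh d j p q))"
proof -
  define n0 where "n0 = s - 2*d - 1"
  have tn: "red_topn Nh d = n0" "dim_col Nh - 1 = n0" unfolding red_topn_def n0_def dr dc using s by auto
  have Ueq: "red_U Nh d = mat n0 n0 (\<lambda>(r,c). Nh $$ (r,c))"
    unfolding red_U_def tn by simp
  have "\<exists>x. \<forall>c<n0. (\<Sum>r<n0. x r * red_U Nh d $$ (r,c)) = - red_w Nh d j p q c"
    by (rule solve_exists[OF _ U]) (simp add: Ueq)
  hence "\<exists>x. \<forall>c < dim_col Nh - 1.
       (\<Sum>r < red_topn Nh d. x r * red_U Nh d $$ (r, c)) = - red_w Nh d j p q c"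
    unfolding tn .
  hence "\<forall>c < dim_col Nh - 1.
       (\<Sum>r < red_topn Nh d. red_x Nh d j p q r * red_U Nh d $$ (r, c)) = - red_w Nh d j p q c"
    unfolding red_x_def by (rule someI_ex)
  hence x: "\<forall>c<n0. (\<Sum>r<n0. red_x Nh d j p q r * Nh $$ (r,c)) = - red_w Nh d j p q c"
    unfolding tn by (simp add: Ueq)
  show ?thesis
    unfolding n0_def[symmetric] Dm_schur[OF x] Ueq[symmetric] red_h_def red_v_def tn by simp
qed

lemma KL:
  fixes Nh :: "'a::field_char_0 mat"
  assumes dr: "dim_row Nh = s - d" and dc: "dim_col Nh = s - 2*d" and s: "2*d+1 \<le> s"
    and d: "1 \<le> d" and U: "det (red_U Nh d) \<noteq> 0"
  shows "subres_mat d (d-1) j (subres_poly s d Nh) (pderiv (subres_poly s d Nh))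
         = det (red_U Nh d) \<cdot>\<^sub>m red_step Nh d j"
proof (rule eq_matI)
  let ?A = "subres_poly s d Nh"
  let ?n0 = "s-2*d-1"
  show "dim_row (subres_mat d (d-1) j ?A (pderiv ?A)) = dim_row (det (red_U Nh d) \<cdot>\<^sub>m red_step Nh d j)"
    "dim_col (subres_mat d (d-1) j ?A (pderiv ?A)) = dim_col (det (red_U Nh d) \<cdot>\<^sub>m red_step Nh d j)"
    using d by (auto simp: subres_mat_def red_step_def)
  fix r c assume r: "r < dim_row (det (red_U Nh d) \<cdot>\<^sub>m red_step Nh d j)"
    and c: "c < dim_col (det (red_U Nh d) \<cdot>\<^sub>m red_step Nh d j)"
  hence r: "r < 2*d-j-1" and c: "c < 2*d-2*j-1" by (auto simp: red_step_def)
  have rhs: "(det (red_U Nh d) \<cdot>\<^sub>m red_step Nh d j) $$ (r,c)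
     = det (Dm Nh ?n0 (red_w Nh d j (r+1) (c+1)))"
    using r c red_h_det[OF dr dc s U] by (simp add: red_step_def)
  have lhs: "subres_mat d (d-1) j ?A (pderiv ?A) $$ (r,c) =
     (if c < d - 1 - j then (if c \<le> r \<and> r - c \<le> d then coeff ?A (d - (r - c)) else 0)
     else (if c - (d-1-j) \<le> r \<and> r - (c - (d-1-j)) \<le> d - 1
           then coeff (pderiv ?A) (d - 1 - (r - (c - (d-1-j)))) else 0))"
    using r c d by (simp add: subres_mat_def Let_def)
  have cA: "coeff ?A (d - i) = det (Dm Nh ?n0 (red_rho Nh d (i+1)))" if "i \<le> d" for i
    using that sub_minor_Dm[OF dr dc s, of "d - i"] by (simp add: coeff_subres_poly)
  have main: "(if c < d - 1 - j then (if c \<le> r \<and> r - c \<le> d then coeff ?A (d - (r - c)) else 0)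
     else (if c - (d-1-j) \<le> r \<and> r - (c - (d-1-j)) \<le> d - 1
           then coeff (pderiv ?A) (d - 1 - (r - (c - (d-1-j)))) else 0))
     = det (Dm Nh ?n0 (red_w Nh d j (r+1) (c+1)))"
  proof (cases "c < d - 1 - j")
    case True
    show ?thesis
    proof (cases "c \<le> r \<and> r - c \<le> d")
      case T2: True
      have "red_w Nh d j (r+1) (c+1) = red_rho Nh d (r - c + 1)"
        using True T2 by (intro ext) (auto simp: red_w_def)
      thus ?thesis using True T2 cA[of "r-c"] by simp
    next
      case F2: False
      have "red_w Nh d j (r+1) (c+1) = (\<lambda>_. 0)"
        using True F2 by (intro ext) (auto simp: red_w_def)
      thus ?thesis using True F2 by (auto simp: Dm_lin)
    qed
  next
    case False
    define c' where "c' = c - (d-1-j)"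
    have jd: "j < d" using c by linarith
    show ?thesis
    proof (cases "c' \<le> r \<and> r - c' \<le> d - 1")
      case T2: True
      have "red_w Nh d j (r+1) (c+1) = (\<lambda>cc. of_nat (d - (r - c')) * red_rho Nh d (r - c' + 1) cc)"
        using False T2 c jd unfolding c'_def by (intro ext) (auto simp: red_w_def)
      moreover have "coeff (pderiv ?A) (d - 1 - (r - c')) = of_nat (d - (r - c')) * coeff ?A (d - (r - c'))"
      proof -
        have e: "Suc (d - 1 - (r - c')) = d - (r - c')" using T2 d by arith
        show ?thesis unfolding coeff_pderiv e ..
      qed
      moreover have "r - c' \<le> d" using T2 by arith
      ultimately show ?thesis using False T2 cA[of "r-c'"] d unfolding c'_def[symmetric]
        by (simp add: Dm_smult)
    next
      case F2: False
      have "red_w Nh d j (r+1) (c+1) = (\<lambda>_. 0)"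
        using False F2 c jd unfolding c'_def by (intro ext) (auto simp: red_w_def)
      thus ?thesis using False F2 unfolding c'_def[symmetric] by (auto simp: Dm_lin)
    qed
  qed
  show "subres_mat d (d-1) j ?A (pderiv ?A) $$ (r,c) = (det (red_U Nh d) \<cdot>\<^sub>m red_step Nh d j) $$ (r,c)"
    by (simp only: lhs rhs main)
qed


lemma sub_minor_smult:
  assumes "dim_row M = s - j" "dim_col M = s - 2*j"
  shows "sub_minor s j (a \<cdot>\<^sub>m M) \<tau> = a \<cdot>\<^sub>m sub_minor s j M \<tau>"
  unfolding sub_minor_def by (rule eq_matI) (use assms in auto)

lemma subres_poly_smult:
  assumes "dim_row M = s - j" "dim_col M = s - 2*j"
  shows "subres_poly s j (a \<cdot>\<^sub>m M) = smult (a ^ (s - 2*j)) (subres_poly s j M)"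
proof -
  have sm: "smult b (\<Sum>x\<in>S. f x) = (\<Sum>x\<in>S. smult b (f x))" for b :: 'a and S and f :: "nat \<Rightarrow> 'a poly"
    by (induction S rule: infinite_finite_induct) (auto simp: smult_add_right)
  show ?thesis unfolding subres_poly_def sub_minor_smult[OF assms]
    by (simp add: sm smult_monom sub_minor_def)
qed

lemma subres_mat_smult:
  "subres_mat p q j (smult a A) (smult a B) = a \<cdot>\<^sub>m subres_mat p q j A B"
  unfolding subres_mat_def by (rule eq_matI) (auto simp: Let_def)

definition sS :: "(nat \<Rightarrow> nat) \<Rightarrow> 'a::zero poly \<Rightarrow> 'a poly \<Rightarrow> nat \<Rightarrow> nat" where
  "sS js F G k = (if k = 1 then degree F + degree G else 2 * js (k - 1) - 1)"

lemma hatN_dims: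
  "dim_row (hatN js F G (Suc n) j) = sS js F G (Suc n) - j \<and>
   dim_col (hatN js F G (Suc n) j) = sS js F G (Suc n) - 2*j"
  by (cases n) (auto simp: sS_def subres_mat_def red_step_def)

lemma hatS_sS: "hatS js F G (Suc n) j = subres_poly (sS js F G (Suc n)) j (hatN js F G (Suc n) j)"
  unfolding hatS_def sS_def by simp

lemma PRS_deg_aux:
  assumes P: "is_PRS A B Q L" and i: "2 \<le> i" "i \<le> L"
  shows "degree (Q i) + (i - 2) \<le> degree (Q 2)"
  using i
proof (induction i rule: dec_induct)
  case base thus ?case by simp
next
  case (step m)
  have "Suc m \<in> {2..L}" using step by auto
  hence "degree (Q (Suc m - 1)) > degree (Q (Suc m))"
    using P unfolding is_PRS_def by blast
  thus ?case using step by simp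
qed

lemma PRS_deg:
  assumes P: "is_PRS A B Q L" and L: "3 \<le> L"
  shows "degree (Q L) < degree (Q 2)"
  using PRS_deg_aux[OF P, of L] L by simp

lemma RB: "hatR js F G (Suc n) * hatB js F G (Suc n) =
   (hatR js F G n * hatB js F G n) ^ Jkj js F G (Suc n) (js (Suc n)) * hatBkj js F G (Suc n) (js (Suc n))"
  by (cases n) (auto simp: hatB_def hatBkj_def)

lemma step_lemma:
  fixes F G :: "'a::field_char_0 poly"
  assumes IH: "tildeS js F G (Suc n) (js (Suc n)) =
     smult ((hatR js F G n * hatB js F G n) ^ Jkj js F G (Suc n) (js (Suc n)) * hatBkj js F G (Suc n) (js (Suc n)))
        (hatS js F G (Suc n) (js (Suc n)))"
    and s: "2 * js (Suc n) + 1 \<le> sS js F G (Suc n)" and d: "1 \<le> js (Suc n)"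
    and U: "det (Umat js F G (Suc (Suc n))) \<noteq> 0"
  shows "tildeS js F G (Suc (Suc n)) j =
     smult ((hatR js F G (Suc n) * hatB js F G (Suc n)) ^ Jkj js F G (Suc (Suc n)) j * hatBkj js F G (Suc (Suc n)) j)
        (hatS js F G (Suc (Suc n)) j)"
proof -
  define d where "d = js (Suc n)"
  define c0 where "c0 = hatR js F G (Suc n) * hatB js F G (Suc n)"
  define Nh where "Nh = hatN js F G (Suc n) d"
  define s' where "s' = sS js F G (Suc n)"
  define A where "A = subres_poly s' d Nh"
  define e where "e = det (red_U Nh d)"
  have Ue: "Umat js F G (Suc (Suc n)) = red_U Nh d" unfolding Umat_def Nh_def d_def by simp
  have IH': "tildeS js F G (Suc n) d = smult c0 A"
    using IH unfolding c0_def RB A_def hatS_sS s'_def Nh_def d_def .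
  have dims: "dim_row Nh = s' - d" "dim_col Nh = s' - 2*d" using hatN_dims[of js F G n d] unfolding Nh_def s'_def by auto
  have KL': "subres_mat d (d-1) j A (pderiv A) = e \<cdot>\<^sub>m red_step Nh d j"
    unfolding A_def e_def
    by (rule KL[OF dims]) (use s d U in \<open>auto simp: d_def s'_def Ue\<close>)
  have rsd: "dim_row (red_step Nh d j) = (2*d-1) - j" "dim_col (red_step Nh d j) = (2*d-1) - 2*j"
    by (auto simp: red_step_def)
  have rsd2: "dim_row (e \<cdot>\<^sub>m red_step Nh d j) = (2*d-1) - j" "dim_col (e \<cdot>\<^sub>m red_step Nh d j) = (2*d-1) - 2*j"
    using rsd by auto
  have "tildeS js F G (Suc (Suc n)) j = subres_poly (2*d-1) j (subres_mat d (d-1) j (smult c0 A) (pderiv (smult c0 A)))"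
    using IH' by (simp add: d_def Let_def)
  also have "\<dots> = subres_poly (2*d-1) j (c0 \<cdot>\<^sub>m (e \<cdot>\<^sub>m red_step Nh d j))"
    unfolding pderiv_smult subres_mat_smult KL' ..
  also have "\<dots> = smult (c0 ^ (2*d-1-2*j)) (smult (e ^ (2*d-1-2*j)) (subres_poly (2*d-1) j (red_step Nh d j)))"
    unfolding subres_poly_smult[OF rsd2] subres_poly_smult[OF rsd] ..
  also have "\<dots> = smult (c0 ^ Jkj js F G (Suc (Suc n)) j * hatBkj js F G (Suc (Suc n)) j)
        (hatS js F G (Suc (Suc n)) j)"
  proof -
    have J: "Jkj js F G (Suc (Suc n)) j = 2*d-1-2*j" unfolding Jkj_def d_def by simp
    have B: "hatBkj js F G (Suc (Suc n)) j = e ^ (2*d-1-2*j)"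
      unfolding hatBkj_def J e_def Ue by simp
    have H: "hatS js F G (Suc (Suc n)) j = subres_poly (2*d-1) j (red_step Nh d j)"
      unfolding hatS_def Nh_def d_def by simp
    show ?thesis unfolding J B H by simp
  qed
  finally show ?thesis unfolding c0_def .
qed


theorem mainTheorem8:
  fixes F G :: "'a::{field_char_0,field_gcd} poly"
    and t :: nat and P :: "nat \<Rightarrow> nat \<Rightarrow> 'a poly" and l :: "nat \<Rightarrow> nat"
  assumes "complete_rec_PRS F G t P l"
    and "\<forall>k\<in>{1..<t}. 3 \<le> l k"
    and "\<forall>k\<in>{2..t}. det (Umat (jseq P l) F G k) \<noteq> 0"
  shows "\<forall>k\<in>{1..t}. \<forall>j < degree (P k 2).
           tildeS (jseq P l) F G k j =
           smult ((hatR (jseq P l) F G (k - 1) * hatB (jseq P l) F G (k - 1))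
                    ^ Jkj (jseq P l) F G k j * hatBkj (jseq P l) F G k j)
                 (hatS (jseq P l) F G k j)"
proof -
  define js where "js = jseq P l"
  have dFG: "degree F > degree G" and PRS: "\<forall>k\<in>{1..t}. is_PRS (P k 1) (P k 2) (P k) (l k)"
    and P11: "P 1 1 = F" and P12: "P 1 2 = G"
    and rec: "\<forall>k\<in>{2..t}. P k 1 = P (k - 1) (l (k - 1)) \<and> P k 2 = pderiv (P k 1)"
    and pos: "\<forall>k\<in>{1..<t}. degree (P k (l k)) > 0"
    using assms(1) unfolding complete_rec_PRS_def by auto
  have jsS: "js (Suc n) = degree (P (Suc n) (l (Suc n)))" for n unfolding js_def jseq_def by simp
  have F1: "1 \<le> js (Suc n) \<and> 2 * js (Suc n) + 1 \<le> sS js F G (Suc n)" if n: "Suc (Suc n) \<le> t" for n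
  proof -
    have k: "Suc n \<in> {1..t}" "Suc n \<in> {1..<t}" using n by auto
    have lt: "js (Suc n) < degree (P (Suc n) 2)"
      unfolding jsS by (rule PRS_deg) (use PRS k assms(2) in auto)
    have "0 < degree (P (Suc n) (l (Suc n)))" using pos k(2) by blast
    hence p: "1 \<le> js (Suc n)" unfolding jsS by simp
    show ?thesis
    proof (cases n)
      case 0
      thus ?thesis using lt p dFG P12 by (simp add: sS_def)
    next
      case (Suc n')
      have "Suc (Suc n') \<in> {2..t}" using n Suc by auto
      hence "degree (P (Suc n) 2) = js (Suc n') - 1"
        using rec Suc by (simp add: degree_pderiv jsS)
      thus ?thesis using lt p Suc by (simp add: sS_def)
    qed
  qed
  have main: "\<forall>j. tildeS js F G (Suc n) j =
           smult ((hatR js F G n * hatB js F G n)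
                    ^ Jkj js F G (Suc n) j * hatBkj js F G (Suc n) j)
                 (hatS js F G (Suc n) j)" if "Suc n \<le> t" for n
    using that
  proof (induction n)
    case 0
    show ?case by (simp add: hatS_def hatB_def hatBkj_def)
  next
    case (Suc n)
    have IH: "tildeS js F G (Suc n) (js (Suc n)) =
     smult ((hatR js F G n * hatB js F G n) ^ Jkj js F G (Suc n) (js (Suc n)) * hatBkj js F G (Suc n) (js (Suc n)))
        (hatS js F G (Suc n) (js (Suc n)))" using Suc by auto
    have U: "det (Umat js F G (Suc (Suc n))) \<noteq> 0" using assms(3) Suc.prems unfolding js_def by auto
    show ?case using step_lemma[OF IH _ _ U] F1[OF Suc.prems] by blast
  qed
  show ?thesis unfolding js_def[symmetric]
  proof (intro ballI allI impI)
    fix k j assume k: "k \<in> {1..t}"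
    then obtain n where n: "k = Suc n" by (cases k) auto
    show "tildeS js F G k j = smult ((hatR js F G (k - 1) * hatB js F G (k - 1)) ^ Jkj js F G k j *
            hatBkj js F G k j) (hatS js F G k j)"
      using main[of n] k n by auto
  qed
qed

end
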